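(* Let $K$ be a field of characteristic $\neq 2$ and $A\in K\setminus\{0\}$ a non-zero constant. Then $x^2+y^2+z^2=Axyz$ has a fundamental Markoff triple if and only if $K$ contains a square root $i$ of $-1$. Moreover, if $i\in K$, every fundamental Markoff triple has one of the forms $$(0,\varepsilon if,f)\qquad\text{or}\qquad\left(\tfrac{2a}{A},\,af+\varepsilon\tfrac{2ai}{A},\,f\right)$$ for some $f\in K[t]\setminus K$, $a\in\{\pm1\}$ and $\varepsilon\in\{\pm1\}$.
   Context: Solutions are triples $(x,y,z)\in K[t]^3$ with $x^2+y^2+z^2=Axyz$. The degree of the zero polynomial is $-\infty$. The height is $\max\{\deg x,\deg y,\deg z\}$. A Markoff triple is a solution with positive height and $\deg x\le\deg y\le\deg z$; it is fundamental if moreover $\deg y=\deg z$. *)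

theory Defs
  imports "HOL-Computational_Algebra.Polynomial" "HOL-Library.Extended_Real"
begin

definition pdeg :: "'a::zero poly \<Rightarrow> ereal" where
  "pdeg p = (if p = 0 then -\<infinity> else ereal (real (degree p)))"

definition is_solution :: "'k::comm_ring_1 \<Rightarrow> 'k poly \<Rightarrow> 'k poly \<Rightarrow> 'k poly \<Rightarrow> bool" where
  "is_solution A x y z \<longleftrightarrow> x^2 + y^2 + z^2 = smult A (x * y * z)"

definition height :: "'k::zero poly \<Rightarrow> 'k poly \<Rightarrow> 'k poly \<Rightarrow> ereal" where
  "height x y z = max (pdeg x) (max (pdeg y) (pdeg z))"

definition markoff_triple :: "'k::comm_ring_1 \<Rightarrow> 'k poly \<Rightarrow> 'k poly \<Rightarrow> 'k poly \<Rightarrow> bool" where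
  "markoff_triple A x y z \<longleftrightarrow> is_solution A x y z \<and> height x y z > 0
     \<and> pdeg x \<le> pdeg y \<and> pdeg y \<le> pdeg z"

definition fundamental_markoff_triple :: "'k::comm_ring_1 \<Rightarrow> 'k poly \<Rightarrow> 'k poly \<Rightarrow> 'k poly \<Rightarrow> bool" where
  "fundamental_markoff_triple A x y z \<longleftrightarrow> markoff_triple A x y z \<and> pdeg y = pdeg z"

end

theory Submission imports Defs begin

lemma fm_basic:
  fixes A :: "'k::field"
  assumes "fundamental_markoff_triple A x y z"
  shows "is_solution A x y z \<and> y \<noteq> 0 \<and> z \<noteq> 0 \<and> degree y = degree z \<and> degree z \<ge> 1
     \<and> (x \<noteq> 0 \<longrightarrow> degree x \<le> degree z)"
proof -
  from assms have s: "is_solution A x y z" and h: "height x y z > 0"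
    and xy: "pdeg x \<le> pdeg y" and yz: "pdeg y = pdeg z"
    unfolding fundamental_markoff_triple_def markoff_triple_def by auto
  have "height x y z = pdeg z" using xy yz unfolding height_def by (simp add: max_def)
  with h have pz: "pdeg z > 0" by simp
  hence z: "z \<noteq> 0" and dz: "degree z \<ge> 1" unfolding pdeg_def by (auto split: if_splits)
  have y: "y \<noteq> 0" using yz z unfolding pdeg_def by (auto split: if_splits)
  have "degree y = degree z" using yz y z unfolding pdeg_def by auto
  have "x \<noteq> 0 \<longrightarrow> degree x \<le> degree z" using xy yz y z unfolding pdeg_def by auto
  thus ?thesis using s y z dz \<open>degree y = degree z\<close> by auto
qed

lemma case0:
  fixes A :: "'k::field"
  assumes "is_solution A 0 y z" "y \<noteq> 0" "z \<noteq> 0"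
  shows "(\<exists>i::'k. i^2 = -1) \<and> (\<forall>i. i^2 = (-1::'k) \<longrightarrow> y = smult i z \<or> y = smult (-i) z)"
proof -
  have e: "y^2 = -(z^2)" using assms(1) unfolding is_solution_def by (simp add: eq_neg_iff_add_eq_0)
  have "lead_coeff (y^2) = lead_coeff (-(z^2))" using e by simp
  hence "(lead_coeff y)^2 = -((lead_coeff z)^2)" by (simp add: lead_coeff_power)
  hence "(lead_coeff y / lead_coeff z)^2 = -1" using assms(3)
    by (simp add: power_divide)
  moreover have "y = smult i z \<or> y = smult (-i) z" if i: "i^2 = (-1::'k)" for i
  proof -
    have "(y - smult i z) * (y + smult i z) = y^2 - smult (i^2) (z^2)"
      by (simp add: algebra_simps power2_eq_square)
    also have "\<dots> = 0" using e i by simp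
    finally show ?thesis by (auto simp: eq_neg_iff_add_eq_0)
  qed
  ultimately show ?thesis by auto
qed

lemma case1:
  fixes A :: "'k::field"
  assumes s: "is_solution A x y z" and x: "x \<noteq> 0" and y: "y \<noteq> 0" and z: "z \<noteq> 0"
    and dyz: "degree y = degree z" and dz: "degree z \<ge> 1" and dx: "degree x \<le> degree z"
    and A: "A \<noteq> 0"
  shows "\<exists>c r d. x = [:c:] \<and> c \<noteq> 0 \<and> c = 2*r/A \<and> (r = 1 \<or> r = -1)
            \<and> y = smult r z + [:d:] \<and> d^2 = -(c^2)"
proof -
  define n where "n = degree z"
  have e: "x^2 + y^2 + z^2 = smult A (x * y * z)" using s unfolding is_solution_def .
  have "degree (x^2) \<le> 2 * degree x" by (metis degree_power_le mult.commute)
  hence d1: "degree (x^2) \<le> 2*n" using dx n_def by linarith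
  have d2: "degree (y^2) \<le> 2*n" using dyz n_def by (metis degree_power_le mult.commute)
  have d3: "degree (z^2) \<le> 2*n" using n_def by (metis degree_power_le mult.commute)
  have "degree (x^2 + y^2 + z^2) \<le> 2*n"
    by (meson d1 d2 d3 degree_add_le)
  moreover have "degree (smult A (x * y * z)) = degree x + 2*n"
    using A x y z dyz n_def by (simp add: degree_mult_eq)
  ultimately have "degree x = 0" using e by simp
  then obtain c where xc: "x = [:c:]" by (meson degree0_coeffs)
  have c: "c \<noteq> 0" using x xc by simp
  have e2: "y^2 + z^2 + [:c^2:] = smult (A*c) (y*z)"
    using e unfolding xc by (simp add: power2_eq_square algebra_simps)
  define p where "p = lead_coeff y"
  define q where "q = lead_coeff z"
  have p: "p \<noteq> 0" and q: "q \<noteq> 0" using y z p_def q_def by auto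
  have "coeff (y^2 + z^2 + [:c^2:]) (2*n) = coeff (smult (A*c) (y*z)) (2*n)" using e2 by simp
  moreover have "coeff (y^2) (2*n) = p^2"
    using coeff_mult_degree_sum[of y y] dyz n_def p_def by (simp add: power2_eq_square mult_2)
  moreover have "coeff (z^2) (2*n) = q^2"
    using coeff_mult_degree_sum[of z z] n_def q_def by (simp add: power2_eq_square mult_2)
  moreover have "coeff (y*z) (2*n) = p*q"
    using coeff_mult_degree_sum[of y z] dyz n_def p_def q_def by (simp add: mult_2)
  moreover have "coeff [:c^2:] (2*n) = 0" using dz n_def by (cases "2*n") auto
  ultimately have eq1: "p^2 + q^2 = A*c*(p*q)" by simp
  define r where "r = p / q"
  have r0: "r \<noteq> 0" using p q r_def by simp
  have rsum: "r + inverse r = A*c"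
  proof -
    have "r^2 + 1 = A*c*r" using eq1 q unfolding r_def
      by (simp add: field_simps power2_eq_square)
    thus ?thesis using r0 by (simp add: field_simps power2_eq_square)
  qed
  define u where "u = y - smult r z"
  define v where "v = y - smult (inverse r) z"
  have "u * v = y^2 - smult (r + inverse r) (y*z) + smult (r * inverse r) (z^2)"
    unfolding u_def v_def by (simp add: algebra_simps power2_eq_square smult_add_left)
  also have "\<dots> = y^2 + z^2 - smult (A*c) (y*z)" using rsum r0 by simp
  also have "\<dots> = - [:c^2:]"
  proof -
    have e3: "y^2 + z^2 = smult (A*c) (y*z) - [:c^2:]" using e2 by (simp add: eq_diff_eq)
    show ?thesis unfolding e3 by simp
  qed
  finally have uv: "u * v = [:-(c^2):]" by simp
  have "u \<noteq> 0" "v \<noteq> 0" using uv c by auto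
  hence "degree u + degree v = 0" using uv by (metis degree_mult_eq degree_pCons_0)
  hence du: "degree u = 0" and dv: "degree v = 0" by auto
  have rr: "r = inverse r"
  proof (rule ccontr)
    assume ne: "r \<noteq> inverse r"
    have "u - v = smult (inverse r - r) z" unfolding u_def v_def by (simp add: algebra_simps smult_diff_left)
    hence "degree (u - v) = degree z" using ne by simp
    moreover have "degree (u - v) = 0" using du dv degree_diff_le[of u 0 v] by simp
    ultimately show False using dz by simp
  qed
  hence "r * r = 1" using r0 by (metis right_inverse)
  hence r1: "r = 1 \<or> r = -1" using power2_eq_1_iff[of r] by (simp add: power2_eq_square)
  have cA: "c = 2*r/A" using rsum rr A by (simp add: field_simps)
  have uveq: "u = v" using rr unfolding u_def v_def by simp
  obtain d where ud: "u = [:d:]" using du by (meson degree0_coeffs)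
  have "[:d*d:] = [:-(c^2):]" using uv unfolding uveq[symmetric] ud by simp
  hence dd: "d^2 = -(c^2)" by (simp add: power2_eq_square)
  have "y = smult r z + [:d:]" using ud unfolding u_def by (simp add: algebra_simps)
  thus ?thesis using xc c cA r1 dd by blast
qed

lemma sqrt_neg1:
  fixes i j :: "'k::field"
  assumes "i^2 = -1" "j^2 = -1"
  shows "j = i \<or> j = -i"
proof -
  have "(j - i) * (j + i) = 0" using assms by (simp add: algebra_simps power2_eq_square)
  thus ?thesis by (auto simp: eq_neg_iff_add_eq_0)
qed

theorem lemma2p4:
  fixes A :: "'k::field"
  assumes char: "(2::'k) \<noteq> 0"
    and A: "A \<noteq> 0"
  shows "((\<exists>x y z. fundamental_markoff_triple A x y z) \<longleftrightarrow> (\<exists>i::'k. i^2 = -1))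
    \<and> (\<forall>i::'k. i^2 = -1 \<longrightarrow>
         (\<forall>x y z. fundamental_markoff_triple A x y z \<longrightarrow>
            (\<exists>f a \<epsilon>. degree f \<ge> 1 \<and> a \<in> {1, -1} \<and> \<epsilon> \<in> {1, -1} \<and>
               ((x = 0 \<and> y = smult (\<epsilon> * i) f \<and> z = f) \<or>
                (x = [:2 * a / A:] \<and> y = smult a f + [:\<epsilon> * 2 * a * i / A:] \<and> z = f)))))"
proof (intro conjI iffI allI impI)
  assume "\<exists>x y z. fundamental_markoff_triple A x y z"
  then obtain x y z where fm: "fundamental_markoff_triple A x y z" by blast
  note b = fm_basic[OF fm]
  show "\<exists>i::'k. i^2 = -1"
  proof (cases "x = 0")
    case True
    thus ?thesis using case0[of A y z] b by simp
  next
    case False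
    then obtain c r d :: 'k where "c \<noteq> 0" "d^2 = -(c^2)"
      using case1[of A x y z] b A by blast
    hence "(d/c)^2 = -1" by (simp add: power_divide)
    thus ?thesis by blast
  qed
next
  assume "\<exists>i::'k. i^2 = -1"
  then obtain i :: 'k where i: "i^2 = -1" by blast
  have i0: "i \<noteq> 0" using i by auto
  let ?z = "[:0, 1:] :: 'k poly"
  have sq: "[:0, i:]^2 + [:0, 1:]^2 = (0::'k poly)"
  proof -
    have "[:0, i:]^2 = smult (i^2) ([:0, 1:]^2)"
      by (metis smult_power smult_pCons smult_0_right mult.right_neutral mult_zero_right)
    thus ?thesis by (simp add: i)
  qed
  have "fundamental_markoff_triple A 0 (smult i ?z) ?z"
    unfolding fundamental_markoff_triple_def markoff_triple_def is_solution_def height_def pdeg_def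
    using i i0 sq by simp
  thus "\<exists>x y z. fundamental_markoff_triple A x y z" by blast
next
  fix i :: 'k and x y z
  assume i: "i^2 = -1" and fm: "fundamental_markoff_triple A x y z"
  note b = fm_basic[OF fm]
  show "\<exists>f a \<epsilon>. degree f \<ge> 1 \<and> a \<in> {1, -1} \<and> \<epsilon> \<in> {1, -1} \<and>
               ((x = 0 \<and> y = smult (\<epsilon> * i) f \<and> z = f) \<or>
                (x = [:2 * a / A:] \<and> y = smult a f + [:\<epsilon> * 2 * a * i / A:] \<and> z = f))"
  proof (cases "x = 0")
    case True
    hence "y = smult i z \<or> y = smult (-i) z" using case0[of A y z] b i by simp
    thus ?thesis
    proof
      assume "y = smult i z"
      thus ?thesis using True b by (intro exI[of _ z] exI[of _ 1] exI[of _ 1]) simp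
    next
      assume "y = smult (-i) z"
      thus ?thesis using True b by (intro exI[of _ z] exI[of _ 1] exI[of _ "-1"]) simp
    qed
  next
    case False
    then obtain c r d :: 'k where cr: "x = [:c:]" "c \<noteq> 0" "c = 2*r/A" "r = 1 \<or> r = -1"
        "y = smult r z + [:d:]" "d^2 = -(c^2)"
      using case1[of A x y z] b A by blast
    have "(d/c)^2 = -1" using cr(2) cr(6) by (simp add: power_divide)
    hence "d/c = i \<or> d/c = -i" using sqrt_neg1 i by blast
    then obtain e where e: "e \<in> {1, -1::'k}" "d = e * i * c"
    proof (elim disjE)
      assume "d/c = i" thus ?thesis using cr(2) by (intro that[of 1]) (auto simp: field_simps)
    next
      assume "d/c = -i" thus ?thesis using cr(2) by (intro that[of "-1"]) (auto simp: field_simps)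
    qed
    have "d = e * 2 * r * i / A" using e(2) cr(3) by simp
    thus ?thesis using cr b e
      by (intro exI[of _ z] exI[of _ r] exI[of _ e]) auto
  qed
qed

end
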